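(* Let $G$ be a board that is symmetric under reflection across some line, with no edges lying along that axis of symmetry and at most one edge crossing that axis. If no edge crosses the axis of symmetry, then Player~2 has a winning strategy in the Game of Cycles on $G$. If a single edge crosses the axis of symmetry, then Player~1 has a winning strategy.
   Context: The Game of Cycles. A board is a simple connected planar graph embedded in the plane, together with its bounded cells; here the embedded board is invariant under reflection across a line. Two players alternate turns; on a turn a player marks one unmarked edge with an arrow pointing along the edge in one of its two directions. Each edge receives at most one arrow, and arrows have the same effect regardless of who placed them. Moves must obey the sink-source rule: no move may create a sink (a vertex all of whose incident edges are marked with arrows pointing toward it) or a source (a vertex all of whose incident edges are marked with arrows pointing away from it). A player who has a legal move must make one. A cycle cell is a bounded cell all of whose boundary edges are marked with arrows all cycling in the same direction around that cell. The first player to create a cycle cell wins; if play ends (no legal move remains) without a cycle cell, the player who made the last move wins. A winning strategy guarantees a win regardless of the opponent's moves. *)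

theory Defs
  imports "HOL-Complex_Analysis.Complex_Analysis"
begin

text \<open>A board is given by a finite vertex set V of points of the plane, a set E of edges,
  each edge being a two-element set of vertices (so the graph is simple), and an embedding
  emb which assigns to each edge an arc (injective path) joining its two endpoints.\<close>

definition board :: "complex set \<Rightarrow> complex set set \<Rightarrow> (complex set \<Rightarrow> real \<Rightarrow> complex) \<Rightarrow> bool" where
  "board V E emb \<longleftrightarrow>
     finite V \<and> V \<noteq> {} \<and>
     (\<forall>e\<in>E. \<exists>u v. u \<in> V \<and> v \<in> V \<and> u \<noteq> v \<and> e = {u, v}) \<and>
     (\<forall>e\<in>E. arc (emb e) \<and> {pathstart (emb e), pathfinish (emb e)} = e
              \<and> path_image (emb e) \<inter> V = e) \<and>
     (\<forall>e\<in>E. \<forall>e'\<in>E. e \<noteq> e' \<longrightarrow> path_image (emb e) \<inter> path_image (emb e') \<subseteq> e \<inter> e') \<and>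
     (\<forall>u\<in>V. \<forall>v\<in>V. (u, v) \<in> {(x, y). {x, y} \<in> E}\<^sup>*)"

definition drawing :: "complex set \<Rightarrow> complex set set \<Rightarrow> (complex set \<Rightarrow> real \<Rightarrow> complex) \<Rightarrow> complex set" where
  "drawing V E emb = V \<union> (\<Union>e\<in>E. path_image (emb e))"

definition cells :: "complex set \<Rightarrow> complex set set \<Rightarrow> (complex set \<Rightarrow> real \<Rightarrow> complex) \<Rightarrow> complex set set" where
  "cells V E emb = {c \<in> components (- drawing V E emb). bounded c}"

definition bedges :: "complex set set \<Rightarrow> (complex set \<Rightarrow> real \<Rightarrow> complex) \<Rightarrow> complex set \<Rightarrow> complex set set" where
  "bedges E emb c = {e \<in> E. path_image (emb e) \<subseteq> frontier c}"

text \<open>A marking is a set M of directed edges (u,v), meaning the edge {u,v} carries an arrow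
  pointing from u to v. The arc of a directed edge, traversed in the arrow direction:\<close>
definition darc :: "(complex set \<Rightarrow> real \<Rightarrow> complex) \<Rightarrow> complex \<times> complex \<Rightarrow> real \<Rightarrow> complex" where
  "darc emb p = (if pathstart (emb {fst p, snd p}) = fst p then emb {fst p, snd p}
                 else reversepath (emb {fst p, snd p}))"

definition marked :: "(complex \<times> complex) set \<Rightarrow> complex set \<Rightarrow> bool" where
  "marked M e \<longleftrightarrow> (\<exists>u v. e = {u, v} \<and> (u, v) \<in> M)"

definition is_sink :: "complex set set \<Rightarrow> (complex \<times> complex) set \<Rightarrow> complex \<Rightarrow> bool" where
  "is_sink E M v \<longleftrightarrow> (\<forall>w. {v, w} \<in> E \<longrightarrow> (w, v) \<in> M)"

definition is_source :: "complex set set \<Rightarrow> (complex \<times> complex) set \<Rightarrow> complex \<Rightarrow> bool" where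
  "is_source E M v \<longleftrightarrow> (\<forall>w. {v, w} \<in> E \<longrightarrow> (v, w) \<in> M)"

text \<open>A legal move in position M: mark an unmarked edge with an arrow, without creating a
  sink or a source (only the endpoints of the new arrow can change status).\<close>
definition legal_move :: "complex set set \<Rightarrow> (complex \<times> complex) set \<Rightarrow> complex \<times> complex \<Rightarrow> bool" where
  "legal_move E M p \<longleftrightarrow>
     {fst p, snd p} \<in> E \<and> \<not> marked M {fst p, snd p} \<and>
     \<not> is_sink E (insert p M) (fst p) \<and> \<not> is_source E (insert p M) (fst p) \<and>
     \<not> is_sink E (insert p M) (snd p) \<and> \<not> is_source E (insert p M) (snd p)"

text \<open>A cycle cell: all boundary edges of the cell are marked and the arrows all cycle in the
  same direction around the cell, i.e. the 1-chain formed by the directed boundary arcs is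
  the (counterclockwise or clockwise) oriented boundary of the cell: its winding number is
  s = 1 or s = -1 at every point of the cell and 0 at every point off the drawing outside
  the cell.\<close>
definition cycle_cell :: "complex set \<Rightarrow> complex set set \<Rightarrow> (complex set \<Rightarrow> real \<Rightarrow> complex)
    \<Rightarrow> (complex \<times> complex) set \<Rightarrow> complex set \<Rightarrow> bool" where
  "cycle_cell V E emb M c \<longleftrightarrow>
     c \<in> cells V E emb \<and>
     (\<forall>e\<in>bedges E emb c. marked M e) \<and>
     (\<exists>s \<in> {1, -1}. \<forall>z. z \<notin> drawing V E emb \<longrightarrow>
        (\<Sum>p\<in>{p \<in> M. {fst p, snd p} \<in> bedges E emb c}. winding_number (darc emb p) z)
          = (if z \<in> c then s else 0))"

definition has_cycle_cell :: "complex set \<Rightarrow> complex set set \<Rightarrow> (complex set \<Rightarrow> real \<Rightarrow> complex)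
    \<Rightarrow> (complex \<times> complex) set \<Rightarrow> bool" where
  "has_cycle_cell V E emb M \<longleftrightarrow> (\<exists>c. cycle_cell V E emb M c)"

text \<open>wins M: the player to move in position M (no cycle cell yet) has a winning strategy;
  loses M: the opponent of the player to move has a winning strategy.  A move creating a
  cycle cell wins immediately; a player with no legal move has lost (the opponent made the
  last move).  Since every move marks a new edge, the game is finite and these inductive
  (least fixed point) predicates express existence of winning strategies.\<close>
inductive wins :: "complex set \<Rightarrow> complex set set \<Rightarrow> (complex set \<Rightarrow> real \<Rightarrow> complex)
    \<Rightarrow> (complex \<times> complex) set \<Rightarrow> bool"
  and loses :: "complex set \<Rightarrow> complex set set \<Rightarrow> (complex set \<Rightarrow> real \<Rightarrow> complex)
    \<Rightarrow> (complex \<times> complex) set \<Rightarrow> bool"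
  for V E emb where
  win_cycle: "legal_move E M p \<Longrightarrow> has_cycle_cell V E emb (insert p M) \<Longrightarrow> wins V E emb M"
| win_move: "legal_move E M p \<Longrightarrow> loses V E emb (insert p M) \<Longrightarrow> wins V E emb M"
| lose: "(\<And>p. legal_move E M p \<Longrightarrow>
            \<not> has_cycle_cell V E emb (insert p M) \<and> wins V E emb (insert p M))
         \<Longrightarrow> loses V E emb M"

text \<open>Reflection across the line through a with direction w (w \<noteq> 0).\<close>
definition reflect :: "complex \<Rightarrow> complex \<Rightarrow> complex \<Rightarrow> complex" where
  "reflect a w z = a + (w / cnj w) * cnj (z - a)"

definition sym_axis :: "complex \<Rightarrow> complex \<Rightarrow> complex set" where
  "sym_axis a w = {a + of_real t * w | t. True}"

definition reflection_invariant :: "complex set \<Rightarrow> complex set set \<Rightarrow> (complex set \<Rightarrow> real \<Rightarrow> complex)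
    \<Rightarrow> complex \<Rightarrow> complex \<Rightarrow> bool" where
  "reflection_invariant V E emb a w \<longleftrightarrow>
     reflect a w ` V = V \<and>
     (\<forall>e\<in>E. reflect a w ` e \<in> E \<and>
             path_image (emb (reflect a w ` e)) = reflect a w ` path_image (emb e))"

definition side :: "complex \<Rightarrow> complex \<Rightarrow> complex \<Rightarrow> real" where
  "side a w z = Im ((z - a) / w)"

definition crosses_axis :: "complex \<Rightarrow> complex \<Rightarrow> complex set \<Rightarrow> bool" where
  "crosses_axis a w e \<longleftrightarrow> (\<exists>u v. e = {u, v} \<and> side a w u < 0 \<and> 0 < side a w v)"

end

theory Submission
  imports Defs
begin

lemma refl_invol: "w \<noteq> 0 \<Longrightarrow> reflect a w (reflect a w z) = z"
  unfolding reflect_def by (simp add: field_simps)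

lemma reflect_alt: "w \<noteq> 0 \<Longrightarrow> reflect a w z = a + w * cnj ((z - a) / w)"
  unfolding reflect_def by (simp add: field_simps)

lemma side_refl: "w \<noteq> 0 \<Longrightarrow> side a w (reflect a w z) = - side a w z"
proof -
  assume w: "w \<noteq> 0"
  have "(reflect a w z - a) / w = cnj ((z - a) / w)" using w unfolding reflect_alt[OF w]
    by (simp del: complex_cnj_divide complex_cnj_diff)
  then show ?thesis by (simp add: side_def del: complex_cnj_divide complex_cnj_diff)
qed

lemma fix_iff: "w \<noteq> 0 \<Longrightarrow> reflect a w z = z \<longleftrightarrow> side a w z = 0"
proof -
  assume w: "w \<noteq> 0"
  have "reflect a w z = z \<longleftrightarrow> cnj ((z - a) / w) = (z - a) / w"
    unfolding reflect_alt[OF w] using w by (auto simp: field_simps)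
  also have "\<dots> \<longleftrightarrow> Im ((z - a) / w) = 0" by (simp add: complex_eq_iff del: complex_cnj_divide complex_cnj_diff)
  finally show ?thesis by (simp add: side_def)
qed

lemma axis_iff: "w \<noteq> 0 \<Longrightarrow> z \<in> sym_axis a w \<longleftrightarrow> side a w z = 0"
proof -
  assume w: "w \<noteq> 0"
  show ?thesis
  proof
    assume "z \<in> sym_axis a w"
    then obtain t where "z = a + of_real t * w" by (auto simp: sym_axis_def)
    then show "side a w z = 0" using w by (simp add: side_def)
  next
    assume "side a w z = 0"
    then have "(z - a) / w = of_real (Re ((z - a) / w))" by (simp add: side_def complex_eq_iff)
    then have "z = a + of_real (Re ((z - a) / w)) * w" using w by (simp add: field_simps)
    then show "z \<in> sym_axis a w" by (auto simp: sym_axis_def)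
  qed
qed

lemma dist_refl: "w \<noteq> 0 \<Longrightarrow> dist (reflect a w x) (reflect a w y) = dist x y"
proof -
  assume w: "w \<noteq> 0"
  have "reflect a w x - reflect a w y = w * cnj ((x - y) / w)"
    unfolding reflect_alt[OF w] by (simp add: algebra_simps diff_divide_distrib)
  then show ?thesis using w by (simp add: dist_norm norm_mult norm_divide del: complex_cnj_divide complex_cnj_diff)
qed

lemma cont_refl: "continuous_on S (reflect a w)"
  unfolding reflect_def by (intro continuous_intros)


locale sb =
  fixes V :: "complex set" and E :: "complex set set"
    and emb :: "complex set \<Rightarrow> real \<Rightarrow> complex" and a w :: complex
  assumes brd: "board V E emb" and wnz: "w \<noteq> 0"
    and ri: "reflection_invariant V E emb a w"
    and nax: "\<forall>e\<in>E. \<not> path_image (emb e) \<subseteq> sym_axis a w"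
begin

abbreviation rf where "rf \<equiv> reflect a w"

lemma rf_rf[simp]: "rf (rf z) = z" using refl_invol[OF wnz] .

lemma rf_eq_iff[simp]: "rf x = rf y \<longleftrightarrow> x = y" by (metis rf_rf)

lemma rf_img_img[simp]: "rf ` rf ` S = S" by (force simp: image_iff)

lemma rf_mem_img[simp]: "rf x \<in> rf ` S \<longleftrightarrow> x \<in> S" by (auto simp: image_iff)

lemma inj_rf: "inj rf" by (auto intro: injI)

lemma E_rf: "e \<in> E \<Longrightarrow> rf ` e \<in> E" using ri by (auto simp: reflection_invariant_def)

lemma E_rf_iff[simp]: "rf ` e \<in> E \<longleftrightarrow> e \<in> E" by (metis E_rf rf_img_img)

lemma edge_rf_iff[simp]: "{rf u, rf v} \<in> E \<longleftrightarrow> {u, v} \<in> E"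
  using E_rf_iff[of "{u,v}"] by simp

lemma V_rf: "rf ` V = V" using ri by (auto simp: reflection_invariant_def)

lemma V_rf_iff[simp]: "rf x \<in> V \<longleftrightarrow> x \<in> V" by (metis V_rf rf_mem_img)

lemma img_emb_rf: "e \<in> E \<Longrightarrow> path_image (emb (rf ` e)) = rf ` path_image (emb e)"
  using ri by (auto simp: reflection_invariant_def)

lemma E_pair: "e \<in> E \<Longrightarrow> \<exists>u v. u \<in> V \<and> v \<in> V \<and> u \<noteq> v \<and> e = {u, v}"
  using brd by (auto simp: board_def)

lemma E_arc: "e \<in> E \<Longrightarrow> arc (emb e)"
  and E_ends: "e \<in> E \<Longrightarrow> {pathstart (emb e), pathfinish (emb e)} = e"
  and E_imgV: "e \<in> E \<Longrightarrow> path_image (emb e) \<inter> V = e"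
  using brd by (auto simp: board_def)

lemma E_disj: "e \<in> E \<Longrightarrow> e' \<in> E \<Longrightarrow> e \<noteq> e' \<Longrightarrow> path_image (emb e) \<inter> path_image (emb e') \<subseteq> e \<inter> e'"
  using brd by (auto simp: board_def)

lemma finV: "finite V" using brd by (auto simp: board_def)

lemma E_sub: "E \<subseteq> Pow V" using E_pair by blast

lemma finE: "finite E" using E_sub finV by (meson finite_Pow_iff finite_subset)

lemma edge_ne: "{u, v} \<in> E \<Longrightarrow> u \<noteq> v"
  using E_pair by (metis doubleton_eq_iff insert_absorb2)

abbreviation D where "D \<equiv> drawing V E emb"

lemma drawing_rf_iff[simp]: "rf z \<in> D \<longleftrightarrow> z \<in> D"
proof -
  have *: "rf z \<in> D" if "z \<in> D" for z
  proof -
    from that consider "z \<in> V" | e where "e \<in> E" "z \<in> path_image (emb e)"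
      by (auto simp: drawing_def)
    then show ?thesis
    proof cases
      case 1 then show ?thesis by (simp add: drawing_def)
    next
      case 2
      then have "rf z \<in> path_image (emb (rf ` e))" using img_emb_rf by auto
      then show ?thesis using 2 E_rf by (auto simp: drawing_def)
    qed
  qed
  show ?thesis using *[of z] *[of "rf z"] by auto
qed

lemma closed_D: "closed D"
proof -
  have "closed V" using finV by (simp add: finite_imp_closed)
  moreover have "closed (\<Union>e\<in>E. path_image (emb e))"
    using finE E_arc by (intro closed_Union) (auto intro: compact_imp_closed compact_path_image arc_imp_path)
  ultimately show ?thesis by (simp add: drawing_def closed_Un)
qed

lemma open_cell: "c \<in> cells V E emb \<Longrightarrow> open c"
  using closed_D by (auto simp: cells_def intro: open_components)

lemma cell_sub: "c \<in> cells V E emb \<Longrightarrow> c \<subseteq> - D"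
  by (auto simp: cells_def dest: in_components_subset)

lemma cell_ne: "c \<in> cells V E emb \<Longrightarrow> c \<noteq> {}"
  by (auto simp: cells_def dest: in_components_nonempty)

lemma cell_rf: "c \<in> cells V E emb \<Longrightarrow> rf ` c \<in> cells V E emb"
proof -
  assume c: "c \<in> cells V E emb"
  then have cc: "c \<in> components (- D)" and bc: "bounded c" by (auto simp: cells_def)
  have "rf ` c \<in> components (- D)"
    unfolding in_components_maximal
  proof (intro conjI allI impI)
    show "rf ` c \<noteq> {}" using cc in_components_nonempty by auto
    show "rf ` c \<subseteq> - D" using in_components_subset[OF cc] by auto
    show "connected (rf ` c)" using in_components_connected[OF cc]
      by (intro connected_continuous_image cont_refl)
    fix D' assume D': "D' \<noteq> {} \<and> rf ` c \<subseteq> D' \<and> D' \<subseteq> - D \<and> connected D'"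
    have "rf ` D' = c"
      using cc unfolding in_components_maximal
    proof (elim conjE allE impE)
      show "rf ` D' \<noteq> {} \<and> c \<subseteq> rf ` D' \<and> rf ` D' \<subseteq> - D \<and> connected (rf ` D')"
        using D' by (auto intro!: connected_continuous_image cont_refl)
           (metis image_mono rf_img_img subsetD)
    qed
    then show "D' = rf ` c" by (metis rf_img_img)
  qed
  moreover have "bounded (rf ` c)"
  proof -
    obtain x e where "\<forall>y\<in>c. dist x y \<le> e" using bc by (auto simp: bounded_def)
    then have "\<forall>y\<in>rf ` c. dist (rf x) y \<le> e" by (auto simp: dist_refl[OF wnz])
    then show ?thesis by (auto simp: bounded_def)
  qed
  ultimately show ?thesis by (simp add: cells_def)
qed

lemma frontier_rf_iff: "rf z \<in> frontier (rf ` S) \<longleftrightarrow> z \<in> frontier S"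
proof -
  have d: "\<And>x y. dist (rf x) (rf y) = dist x y" using dist_refl[OF wnz] .
  have 1: "(\<exists>x\<in>rf ` S. dist (rf z) x < e) \<longleftrightarrow> (\<exists>x\<in>S. dist z x < e)" for e
    by (auto simp: d)
  have 2: "(\<exists>x. x \<notin> rf ` S \<and> dist (rf z) x < e) \<longleftrightarrow> (\<exists>x. x \<notin> S \<and> dist z x < e)" for e
    by (metis d rf_mem_img rf_rf)
  show ?thesis unfolding frontier_straddle 1 2 ..
qed

lemma frontier_rf: "frontier (rf ` S) = rf ` frontier S"
proof
  show "frontier (rf ` S) \<subseteq> rf ` frontier S"
    by (metis frontier_rf_iff rf_rf image_eqI subsetI)
  show "rf ` frontier S \<subseteq> frontier (rf ` S)" using frontier_rf_iff by auto
qed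

lemma bedges_rf: "e \<in> bedges E emb c \<Longrightarrow> rf ` e \<in> bedges E emb (rf ` c)"
  by (auto simp: bedges_def img_emb_rf frontier_rf E_rf)

lemma bedges_rf_iff[simp]: "rf ` e \<in> bedges E emb (rf ` c) \<longleftrightarrow> e \<in> bedges E emb c"
  by (metis bedges_rf rf_img_img)

lemma cont_side: "continuous_on S (side a w)"
  unfolding side_def by (intro continuous_intros) (use wnz in auto)

lemma cell_side:
  assumes c: "c \<in> cells V E emb" and ne: "rf ` c \<noteq> c"
  shows "(\<forall>z\<in>c. side a w z > 0) \<or> (\<forall>z\<in>c. side a w z < 0)"
proof -
  have cc: "c \<in> components (- D)" using c by (auto simp: cells_def)
  have c2: "rf ` c \<in> components (- D)" using cell_rf[OF c] by (auto simp: cells_def)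
  have nz: "side a w z \<noteq> 0" if "z \<in> c" for z
  proof
    assume "side a w z = 0"
    then have "rf z = z" using fix_iff[OF wnz] by simp
    then have "z \<in> rf ` c \<inter> c" using that by (metis IntI rf_mem_img)
    then show False using components_eq[OF cc c2] ne by auto
  qed
  have con: "connected (side a w ` c)"
    using in_components_connected[OF cc] by (intro connected_continuous_image cont_side)
  show ?thesis
  proof (rule ccontr)
    assume "\<not> ?thesis"
    then obtain x y where "x \<in> c" "y \<in> c" "side a w x \<le> 0" "side a w y \<ge> 0" by force
    then have "side a w x < 0" "side a w y > 0" using nz by force+
    then have "0 \<in> side a w ` c"
      using connected_contains_Icc[OF con, of "side a w x" "side a w y"] \<open>x \<in> c\<close> \<open>y \<in> c\<close> by force
    then show False using nz by auto
  qed
qed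

lemma G4:
  assumes c: "c \<in> cells V E emb" and ne: "rf ` c \<noteq> c"
    and e1: "e \<in> bedges E emb c" and e2: "e \<in> bedges E emb (rf ` c)"
  shows False
proof -
  have eE: "e \<in> E" using e1 by (auto simp: bedges_def)
  have cl: "closed {z. side a w z \<ge> 0}" "closed {z. side a w z \<le> 0}"
    using cont_side[of UNIV] by (auto intro: closed_Collect_le continuous_on_const)
  have key: "path_image (emb e) \<subseteq> {z. side a w z \<ge> 0} \<inter> {z. side a w z \<le> 0}"
    if pos: "\<forall>z\<in>c. side a w z > 0" and e1: "e \<in> bedges E emb c" and e2: "e \<in> bedges E emb (rf ` c)" for c
  proof -
    have "closure c \<subseteq> {z. side a w z \<ge> 0}" using pos cl
      by (intro closure_minimal) auto
    moreover have "closure (rf ` c) \<subseteq> {z. side a w z \<le> 0}" using pos cl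
      by (intro closure_minimal) (auto simp: side_refl[OF wnz] less_imp_le)
    ultimately show ?thesis using e1 e2 unfolding bedges_def frontier_def by auto
  qed
  have "path_image (emb e) \<subseteq> {z. side a w z \<ge> 0} \<inter> {z. side a w z \<le> 0}"
    using cell_side[OF c ne]
  proof
    assume "\<forall>z\<in>c. side a w z > 0" then show ?thesis using key e1 e2 by blast
  next
    assume n: "\<forall>z\<in>c. side a w z < 0"
    have "\<forall>z\<in>rf ` c. side a w z > 0" using n by (auto simp: side_refl[OF wnz])
    then show ?thesis using key[of "rf ` c"] e1 e2 by simp
  qed
  then have "path_image (emb e) \<subseteq> sym_axis a w" using axis_iff[OF wnz] by fastforce
  then show False using nax eE by auto
qed

end


lemma arc_reparam:
  fixes g h :: "real \<Rightarrow> 'a::t2_space"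
  assumes g: "arc g" and h: "arc h" and im: "path_image h = path_image g"
    and s: "pathstart h = pathstart g" and f: "pathfinish h = pathfinish g"
  obtains \<phi> where "continuous_on {0..1} \<phi>" "\<phi> \<in> {0..1} \<rightarrow> {0..1}" "\<phi> 0 = 0" "\<phi> 1 = 1"
    "\<And>t. t \<in> {0..1} \<Longrightarrow> h t = g (\<phi> t)" "inj_on \<phi> {0..1}"
proof -
  obtain gi where hom: "homeomorphism {0..1} (path_image g) g gi"
    using homeomorphism_compact[of "{0..1::real}" g "path_image g"] g
    by (auto simp: arc_def path_def path_image_def)
  have gi: "\<And>x. x \<in> {0..1} \<Longrightarrow> gi (g x) = x" "\<And>y. y \<in> path_image g \<Longrightarrow> g (gi y) = y"
    "gi ` path_image g = {0..1}" "continuous_on (path_image g) gi"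
    using hom by (auto simp: homeomorphism_def)
  have hin: "h t \<in> path_image g" if "t \<in> {0..1}" for t using im that by (auto simp: path_image_def)
  show ?thesis
  proof
    show "continuous_on {0..1} (gi \<circ> h)"
      using h hin by (intro continuous_on_compose continuous_on_subset[OF gi(4)])
        (auto simp: arc_def path_def)
    show "gi \<circ> h \<in> {0..1} \<rightarrow> {0..1}" using hin gi(3) by auto
    show "(gi \<circ> h) 0 = 0" using s gi(1)[of 0] by (simp add: pathstart_def)
    show "(gi \<circ> h) 1 = 1" using f gi(1)[of 1] by (simp add: pathfinish_def)
    show "h t = g ((gi \<circ> h) t)" if "t \<in> {0..1}" for t using gi(2) hin that by simp
    show "inj_on (gi \<circ> h) {0..1}"
      using h unfolding arc_def
      by (metis (no_types, lifting) comp_apply gi(2) hin inj_on_def)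
  qed
qed

lemma winding_reparam:
  assumes g: "arc g" and h: "arc h" and im: "path_image h = path_image g"
    and s: "pathstart h = pathstart g" and f: "pathfinish h = pathfinish g"
    and z: "z \<notin> path_image g"
  shows "winding_number h z = winding_number g z"
proof -
  obtain \<phi> where "continuous_on {0..1} \<phi>" "\<phi> \<in> {0..1} \<rightarrow> {0..1}" "\<phi> 0 = 0" "\<phi> 1 = 1"
    "\<And>t. t \<in> {0..1} \<Longrightarrow> h t = g (\<phi> t)"
    using arc_reparam[OF g h im s f] by metis
  then have "homotopic_paths (-{z}) g h"
    using g z by (intro homotopic_paths_reparametrize) (auto simp: arc_imp_path)
  then show ?thesis by (simp add: winding_number_homotopic_paths)
qed


lemma winding_rf:
  assumes wnz: "w \<noteq> 0" and p: "path g" and z: "z \<notin> path_image g"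
  shows "winding_number (reflect a w \<circ> g) (reflect a w z) = - cnj (winding_number g z)"
proof -
  obtain q where q: "path q" "pathfinish q - pathstart q = 2 * of_real pi * \<i> * winding_number g z"
    "\<And>t. t \<in> {0..1} \<Longrightarrow> g t = z + exp (q t)"
    using winding_number_as_continuous_log[OF p z] by metis
  define k where "k = w / cnj w"
  have knz: "k \<noteq> 0" using wnz by (simp add: k_def)
  define L where "L = Ln k"
  have eL: "exp L = k" using knz by (simp add: L_def)
  have pq: "path (\<lambda>t. L + cnj (q t))" using q(1) unfolding path_def
    by (intro continuous_intros) auto
  have "winding_number (reflect a w \<circ> g) (reflect a w z)
        = winding_number (\<lambda>t. (reflect a w \<circ> g) t - reflect a w z) 0"
    by (rule winding_number_offset)
  also have "\<dots> = winding_number (exp \<circ> (\<lambda>t. L + cnj (q t))) 0"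
  proof (rule winding_number_cong)
    fix t :: real assume "0 \<le> t" "t \<le> 1"
    then have gt: "g t = z + exp (q t)" using q(3) by auto
    have "(reflect a w \<circ> g) t - reflect a w z = k * cnj (g t - z)"
      by (simp add: reflect_def k_def algebra_simps)
    also have "\<dots> = exp (L + cnj (q t))" using gt by (simp add: exp_add eL exp_cnj)
    finally show "(reflect a w \<circ> g) t - reflect a w z = (exp \<circ> (\<lambda>t. L + cnj (q t))) t" by simp
  qed
  also have "\<dots> = (cnj (pathfinish q) - cnj (pathstart q)) / (2 * of_real pi * \<i>)"
    using winding_number_compose_exp[OF pq] by (simp add: pathfinish_def pathstart_def)
  also have "\<dots> = cnj (pathfinish q - pathstart q) / (2 * of_real pi * \<i>)" by simp
  also have "\<dots> = - cnj (winding_number g z)" unfolding q(2)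
    by (simp add: field_simps)
  finally show ?thesis .
qed


lemma arc_fix:
  assumes wnz: "w \<noteq> 0" and g: "arc g" and s0: "side a w (pathstart g) = 0"
    and s1: "side a w (pathfinish g) = 0"
    and inv: "reflect a w ` path_image g = path_image g"
  shows "path_image g \<subseteq> sym_axis a w"
proof -
  let ?r = "reflect a w"
  have h: "arc (?r \<circ> g)"
  proof -
    have "continuous_on {0..1} (?r \<circ> g)"
      using g unfolding arc_def path_def by (intro continuous_on_compose cont_refl) auto
    moreover have "inj_on (?r \<circ> g) {0..1}"
      using g unfolding arc_def inj_on_def by (metis comp_apply refl_invol[OF wnz])
    ultimately show ?thesis by (simp add: arc_def path_def)
  qed
  have f0: "?r (pathstart g) = pathstart g" "?r (pathfinish g) = pathfinish g"
    using s0 s1 fix_iff[OF wnz] by auto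
  obtain \<phi> where phi: "continuous_on {0..1} \<phi>" "\<phi> \<in> {0..1} \<rightarrow> {0..1}" "\<phi> 0 = 0" "\<phi> 1 = 1"
    "\<And>t. t \<in> {0..1} \<Longrightarrow> (?r \<circ> g) t = g (\<phi> t)" "inj_on \<phi> {0..1}"
    by (rule arc_reparam[OF g h]) (use inv f0 in \<open>auto simp: path_image_compose pathstart_def pathfinish_def\<close>)
  have mono: "\<phi> x < \<phi> y" if "0 \<le> x" "x < y" "y \<le> 1" for x y
  proof (cases "x = 0")
    case True
    then show ?thesis
    proof (cases "y = 1")
      case True then show ?thesis using \<open>x = 0\<close> phi by simp
    next
      case False
      have "(\<phi> 0 < \<phi> y \<and> \<phi> y < \<phi> 1) \<or> (\<phi> 1 < \<phi> y \<and> \<phi> y < \<phi> 0)"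
        using that False by (intro continuous_inj_imp_mono[OF _ _ phi(1) phi(6)]) auto
      then show ?thesis using True phi by auto
    qed
  next
    case False
    have "{0..y} \<subseteq> {0..1}" using that by auto
    then have "(\<phi> 0 < \<phi> x \<and> \<phi> x < \<phi> y) \<or> (\<phi> y < \<phi> x \<and> \<phi> x < \<phi> 0)"
      using that False
      by (intro continuous_inj_imp_mono continuous_on_subset[OF phi(1)] inj_on_subset[OF phi(6)]) auto
    moreover have "\<phi> x \<ge> 0" using phi(2) that by auto
    ultimately show ?thesis using phi by auto
  qed
  have invol: "\<phi> (\<phi> t) = t" if t: "t \<in> {0..1}" for t
  proof -
    have pt: "\<phi> t \<in> {0..1}" using phi(2) t by auto
    have "g (\<phi> (\<phi> t)) = ?r (g (\<phi> t))" using phi(5)[OF pt] by simp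
    also have "\<dots> = g t" using phi(5)[OF t] by (metis comp_apply refl_invol[OF wnz])
    finally have "g (\<phi> (\<phi> t)) = g t" .
    moreover have "\<phi> (\<phi> t) \<in> {0..1}" using phi(2) pt by auto
    ultimately show ?thesis using g t unfolding arc_def inj_on_def by blast
  qed
  have idt: "\<phi> t = t" if t: "t \<in> {0..1}" for t
  proof (rule ccontr)
    assume ne: "\<phi> t \<noteq> t"
    have pt: "\<phi> t \<in> {0..1}" using phi(2) t by auto
    show False
    proof (cases "\<phi> t < t")
      case True
      then have "\<phi> (\<phi> t) < \<phi> t" using mono[of "\<phi> t" t] pt t by auto
      then show False using invol[OF t] True by simp
    next
      case False
      then have "t < \<phi> t" using ne by simp
      then have "\<phi> t < \<phi> (\<phi> t)" using mono[of t "\<phi> t"] pt t by auto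
      then show False using invol[OF t] \<open>t < \<phi> t\<close> by simp
    qed
  qed
  show ?thesis
  proof
    fix z assume "z \<in> path_image g"
    then obtain t where t: "t \<in> {0..1}" "z = g t" by (auto simp: path_image_def)
    then have "?r z = z" using phi(5)[OF t(1)] idt[OF t(1)] by simp
    then show "z \<in> sym_axis a w" using fix_iff[OF wnz] axis_iff[OF wnz] by simp
  qed
qed


context sb begin

definition mir :: "complex \<times> complex \<Rightarrow> complex \<times> complex" where
  "mir p = (rf (snd p), rf (fst p))"

abbreviation ed :: "complex \<times> complex \<Rightarrow> complex set" where
  "ed p \<equiv> {fst p, snd p}"

lemma mir_mir[simp]: "mir (mir p) = p" by (simp add: mir_def)

lemma inj_mir: "inj mir" by (metis injI mir_mir)

lemma mir_pair[simp]: "mir (u, v) = (rf v, rf u)" by (simp add: mir_def)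

lemma ed_mir: "ed (mir p) = rf ` ed p" by (auto simp: mir_def)

lemma mir_mem_img[simp]: "mir p \<in> mir ` M \<longleftrightarrow> p \<in> M"
  by (metis image_eqI inj_image_mem_iff inj_mir)

lemma darc_all:
  assumes e: "{u, v} \<in> E"
  shows "arc (darc emb (u, v)) \<and> pathstart (darc emb (u, v)) = u \<and> pathfinish (darc emb (u, v)) = v
    \<and> path_image (darc emb (u, v)) = path_image (emb {u, v})"
proof -
  have ne: "u \<noteq> v" using edge_ne[OF e] .
  have ends: "{pathstart (emb {u,v}), pathfinish (emb {u,v})} = {u, v}" using E_ends[OF e] .
  have ar: "arc (emb {u,v})" using E_arc[OF e] .
  show ?thesis
  proof (cases "pathstart (emb {u, v}) = u")
    case True
    then have "pathfinish (emb {u,v}) = v" using ends ne by (metis doubleton_eq_iff)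
    then show ?thesis using True ar by (simp add: darc_def)
  next
    case False
    then have "pathstart (emb {u,v}) = v" "pathfinish (emb {u,v}) = u" using ends ne
      by (metis doubleton_eq_iff insertI1 insert_commute)+
    then show ?thesis using False ar by (simp add: darc_def arc_reversepath)
  qed
qed

lemma darc_props:
  assumes e: "{u, v} \<in> E"
  shows "arc (darc emb (u, v))" "pathstart (darc emb (u, v)) = u" "pathfinish (darc emb (u, v)) = v"
    "path_image (darc emb (u, v)) = path_image (emb {u, v})"
  using darc_all[OF e] by auto

lemma wind_mir:
  assumes e: "{u, v} \<in> E" and z: "z \<notin> path_image (emb {u, v})"
  shows "winding_number (darc emb (rf v, rf u)) (rf z) = cnj (winding_number (darc emb (u, v)) z)"
proof -
  let ?g = "darc emb (u, v)"
  let ?h = "darc emb (rf v, rf u)"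
  let ?k = "reversepath (rf \<circ> ?g)"
  have e2: "{rf v, rf u} \<in> E" using e by (simp add: insert_commute)
  note g = darc_props[OF e]
  note h = darc_props[OF e2]
  have rg: "arc (rf \<circ> ?g)"
  proof -
    have "continuous_on {0..1} (rf \<circ> ?g)"
      using g(1) unfolding arc_def path_def by (intro continuous_on_compose cont_refl) auto
    moreover have "inj_on (rf \<circ> ?g) {0..1}"
      using g(1) unfolding arc_def inj_on_def by (metis comp_apply rf_rf)
    ultimately show ?thesis by (simp add: arc_def path_def)
  qed
  have imk: "path_image ?k = rf ` path_image (emb {u,v})"
    by (simp add: path_image_compose g(4))
  have imh: "path_image ?h = rf ` path_image (emb {u,v})"
    using h(4) img_emb_rf[OF e] by (simp add: insert_commute)
  have "winding_number ?h (rf z) = winding_number ?k (rf z)"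
  proof (rule winding_reparam)
    show "arc ?k" using rg by (simp add: arc_reversepath)
    show "arc ?h" by (rule h(1))
    show "path_image ?h = path_image ?k" using imh imk by simp
    show "pathstart ?h = pathstart ?k" using h g by (simp add: pathfinish_def pathstart_def reversepath_def)
    show "pathfinish ?h = pathfinish ?k" using h g by (simp add: pathfinish_def pathstart_def reversepath_def)
    show "rf z \<notin> path_image ?k" using imk z by simp
  qed
  also have "\<dots> = - winding_number (rf \<circ> ?g) (rf z)"
    using rg imk z by (intro winding_number_reversepath) (auto simp: arc_imp_path path_image_compose g(4))
  also have "\<dots> = cnj (winding_number ?g z)"
    using winding_rf[OF wnz, of ?g z] g z by (simp add: arc_imp_path)
  finally show ?thesis .
qed

lemma marked_iff: "marked M e \<longleftrightarrow> (\<exists>p\<in>M. ed p = e)"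
  unfolding marked_def by (auto; force)

lemma mem_mir_img: "p \<in> mir ` S \<longleftrightarrow> mir p \<in> S" by (metis mir_mem_img mir_mir)

lemma marked_mir: "marked (mir ` M) (rf ` e) \<longleftrightarrow> marked M e"
proof
  assume "marked (mir ` M) (rf ` e)"
  then obtain p' where "p' \<in> mir ` M" "ed p' = rf ` e" unfolding marked_iff by blast
  then obtain p where "p \<in> M" "ed (mir p) = rf ` e" by blast
  then have "rf ` ed p = rf ` e" by (simp only: ed_mir)
  then have "ed p = e" by (metis rf_img_img)
  then show "marked M e" using \<open>p \<in> M\<close> by (auto simp: marked_iff)
next
  assume "marked M e"
  then obtain p where "p \<in> M" "ed p = e" by (auto simp: marked_iff)
  then have "mir p \<in> mir ` M" "ed (mir p) = rf ` e" by (simp_all only: ed_mir) blast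
  then show "marked (mir ` M) (rf ` e)" unfolding marked_iff by blast
qed

lemma sink_mir: "is_sink E (mir ` M) (rf x) \<longleftrightarrow> is_source E M x"
  unfolding is_sink_def is_source_def
proof (intro iffI allI impI)
  fix y assume h: "\<forall>w. {rf x, w} \<in> E \<longrightarrow> (w, rf x) \<in> mir ` M" and "{x, y} \<in> E"
  then have "(rf y, rf x) \<in> mir ` M" by simp
  then have "mir (x, y) \<in> mir ` M" by simp
  then show "(x, y) \<in> M" by (simp only: mir_mem_img)
next
  fix w assume h: "\<forall>y. {x, y} \<in> E \<longrightarrow> (x, y) \<in> M" and "{rf x, w} \<in> E"
  then have "{x, rf w} \<in> E" by (metis edge_rf_iff rf_rf)
  then have "(x, rf w) \<in> M" using h by blast
  then have "mir (x, rf w) \<in> mir ` M" by blast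
  then show "(w, rf x) \<in> mir ` M" by simp
qed

lemma source_mir: "is_source E (mir ` M) (rf x) \<longleftrightarrow> is_sink E M x"
  unfolding is_sink_def is_source_def
proof (intro iffI allI impI)
  fix y assume h: "\<forall>w. {rf x, w} \<in> E \<longrightarrow> (rf x, w) \<in> mir ` M" and "{x, y} \<in> E"
  then have "(rf x, rf y) \<in> mir ` M" by simp
  then have "mir (y, x) \<in> mir ` M" by simp
  then show "(y, x) \<in> M" by (simp only: mir_mem_img)
next
  fix w assume h: "\<forall>y. {x, y} \<in> E \<longrightarrow> (y, x) \<in> M" and "{rf x, w} \<in> E"
  then have "{x, rf w} \<in> E" by (metis edge_rf_iff rf_rf)
  then have "(rf w, x) \<in> M" using h by blast
  then have "mir (rf w, x) \<in> mir ` M" by blast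
  then show "(rf x, w) \<in> mir ` M" by simp
qed

lemma legal_mir: "legal_move E M p \<Longrightarrow> legal_move E (mir ` M) (mir p)"
proof -
  assume l: "legal_move E M p"
  have i: "insert (mir p) (mir ` M) = mir ` insert p M" by simp
  have m: "\<not> marked M (ed p)" using l by (simp add: legal_move_def)
  have "ed (mir p) \<in> E" using l by (simp add: legal_move_def ed_mir)
  moreover have "\<not> marked (mir ` M) (rf ` ed p)" using m marked_mir[of M "ed p"] by blast
  then have "\<not> marked (mir ` M) (ed (mir p))" by (metis ed_mir)
  moreover
  have "fst (mir p) = rf (snd p)" "snd (mir p) = rf (fst p)" by (auto simp: mir_def)
  ultimately show ?thesis using l unfolding legal_move_def i
    by (simp only: sink_mir source_mir) blast
qed

lemma legal_mono: "legal_move E M2 p \<Longrightarrow> M1 \<subseteq> M2 \<Longrightarrow> legal_move E M1 p"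
  unfolding legal_move_def marked_def is_sink_def is_source_def by blast

lemma cycle_local:
  assumes "\<And>p. ed p \<in> bedges E emb c \<Longrightarrow> p \<in> M \<longleftrightarrow> p \<in> M'"
    and "cycle_cell V E emb M c"
  shows "cycle_cell V E emb M' c"
proof -
  have 1: "{p \<in> M. ed p \<in> bedges E emb c} = {p \<in> M'. ed p \<in> bedges E emb c}" using assms(1) by blast
  have 2: "marked M e \<longleftrightarrow> marked M' e" if "e \<in> bedges E emb c" for e
    using assms(1) that unfolding marked_iff by auto
  show ?thesis using assms(2) unfolding cycle_cell_def 1 using 2 by auto
qed

lemma cycle_rf:
  assumes cy: "cycle_cell V E emb M c"
  shows "cycle_cell V E emb (mir ` M) (rf ` c)"
proof -
  have c: "c \<in> cells V E emb" using cy by (simp add: cycle_cell_def)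
  have mk: "\<forall>e\<in>bedges E emb c. marked M e" using cy by (simp add: cycle_cell_def)
  obtain s where s: "s \<in> {1, -1}" and sw: "\<And>z. z \<notin> D \<Longrightarrow>
      (\<Sum>p\<in>{p \<in> M. ed p \<in> bedges E emb c}. winding_number (darc emb p) z) = (if z \<in> c then s else 0)"
    using cy unfolding cycle_cell_def by blast
  have "\<forall>e\<in>bedges E emb (rf ` c). marked (mir ` M) e"
  proof
    fix e assume "e \<in> bedges E emb (rf ` c)"
    then have "rf ` e \<in> bedges E emb c" by (metis bedges_rf_iff rf_img_img)
    then have "marked M (rf ` e)" using mk by auto
    then show "marked (mir ` M) e" using marked_mir by (metis rf_img_img)
  qed
  moreover have "\<forall>z. z \<notin> D \<longrightarrow>
      (\<Sum>p\<in>{p \<in> mir ` M. ed p \<in> bedges E emb (rf ` c)}. winding_number (darc emb p) z)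
        = (if z \<in> rf ` c then s else 0)"
  proof (intro allI impI)
    fix z assume z: "z \<notin> D"
    have rz: "rf z \<notin> D" using z by simp
    have eq: "\<And>p. ed (mir p) \<in> bedges E emb (rf ` c) \<longleftrightarrow> ed p \<in> bedges E emb c"
      by (simp only: ed_mir bedges_rf_iff)
    have set: "{p \<in> mir ` M. ed p \<in> bedges E emb (rf ` c)} = mir ` {p \<in> M. ed p \<in> bedges E emb c}"
    proof (rule set_eqI)
      fix p
      show "p \<in> {p \<in> mir ` M. ed p \<in> bedges E emb (rf ` c)} \<longleftrightarrow> p \<in> mir ` {p \<in> M. ed p \<in> bedges E emb c}"
        unfolding mem_mir_img mem_Collect_eq using eq[of "mir p"] by (simp only: mir_mir)
    qed
    have "(\<Sum>p\<in>{p \<in> mir ` M. ed p \<in> bedges E emb (rf ` c)}. winding_number (darc emb p) z)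
        = (\<Sum>p\<in>{p \<in> M. ed p \<in> bedges E emb c}. winding_number (darc emb (mir p)) z)"
      unfolding set by (subst sum.reindex) (auto intro: inj_on_subset[OF inj_mir])
    also have "\<dots> = (\<Sum>p\<in>{p \<in> M. ed p \<in> bedges E emb c}. cnj (winding_number (darc emb p) (rf z)))"
    proof (rule sum.cong[OF refl])
      fix p assume "p \<in> {p \<in> M. ed p \<in> bedges E emb c}"
      then have eE: "ed p \<in> E" by (auto simp: bedges_def)
      have "rf z \<notin> path_image (emb (ed p))" using rz eE by (auto simp: drawing_def)
      then show "winding_number (darc emb (mir p)) z = cnj (winding_number (darc emb p) (rf z))"
        using wind_mir[of "fst p" "snd p" "rf z"] eE by (simp add: mir_def)
    qed
    also have "\<dots> = cnj (if rf z \<in> c then s else 0)" by (simp only: cnj_sum[symmetric] sw[OF rz])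
    also have "\<dots> = (if z \<in> rf ` c then s else 0)"
      using s by (auto simp: image_iff)
    finally show "(\<Sum>p\<in>{p \<in> mir ` M. ed p \<in> bedges E emb (rf ` c)}. winding_number (darc emb p) z)
        = (if z \<in> rf ` c then s else 0)" .
  qed
  ultimately show ?thesis using cell_rf[OF c] s unfolding cycle_cell_def by blast
qed

end


context sb begin

definition symM where "symM M \<longleftrightarrow> mir ` M = M"
definition valid where "valid M \<longleftrightarrow> (\<forall>p\<in>M. ed p \<in> E) \<and> (\<forall>u v. (u, v) \<in> M \<longrightarrow> (v, u) \<notin> M)"
definition ssm where "ssm M \<longleftrightarrow> (\<forall>e\<in>E. rf ` e = e \<longrightarrow> marked M e)"
definition winmove where "winmove M \<longleftrightarrow> (\<exists>r. legal_move E M r \<and> has_cycle_cell V E emb (insert r M))"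

lemma marked_insert: "marked (insert p M) e \<longleftrightarrow> e = ed p \<or> marked M e"
  unfolding marked_iff by auto

lemma sym_marked: "symM M \<Longrightarrow> marked M (rf ` e) \<longleftrightarrow> marked M e"
  using marked_mir[of M e] by (simp add: symM_def)

lemma step:
  assumes sym: "symM M2" and ss: "ssm M2" and M2: "M2 = insert q M1"
    and nw: "\<not> winmove M1" and nc: "\<not> has_cycle_cell V E emb M2"
  shows "\<not> winmove M2"
proof
  assume "winmove M2"
  then obtain r c where lr: "legal_move E M2 r" and cy: "cycle_cell V E emb (insert r M2) c"
    by (auto simp: winmove_def has_cycle_cell_def)
  have c: "c \<in> cells V E emb" using cy by (simp add: cycle_cell_def)
  have sub: "M1 \<subseteq> M2" using M2 by auto
  have erE: "ed r \<in> E" and nmr: "\<not> marked M2 (ed r)" using lr by (auto simp: legal_move_def)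
  have er: "ed r \<in> bedges E emb c"
  proof (rule ccontr)
    assume "ed r \<notin> bedges E emb c"
    then have "cycle_cell V E emb M2 c"
      by (intro cycle_local[OF _ cy]) auto
    then show False using nc by (auto simp: has_cycle_cell_def)
  qed
  show False
  proof (cases "ed q \<in> bedges E emb c")
    case False
    then have "cycle_cell V E emb (insert r M1) c"
      by (intro cycle_local[OF _ cy]) (auto simp: M2)
    moreover have "legal_move E M1 r" using legal_mono[OF lr sub] .
    ultimately show False using nw unfolding winmove_def has_cycle_cell_def by blast
  next
    case True
    show False
    proof (cases "rf ` c = c")
      case True
      have "rf ` ed r \<in> bedges E emb c" using bedges_rf[OF er] True by simp
      then have "marked (insert r M2) (rf ` ed r)" using cy by (simp add: cycle_cell_def)
      then have "rf ` ed r = ed r \<or> marked M2 (rf ` ed r)" by (simp only: marked_insert)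
      then show False
      proof
        assume "rf ` ed r = ed r"
        then show False using ss erE nmr by (auto simp: ssm_def)
      next
        assume "marked M2 (rf ` ed r)"
        then show False using sym_marked[OF sym] nmr by blast
      qed
    next
      case ne: False
      have q2: "rf ` ed q \<in> bedges E emb (rf ` c)" using bedges_rf[OF True] .
      show False
      proof (cases "rf ` ed q \<in> bedges E emb c")
        case True
        show False using G4[OF c ne _ q2] True
          by (metis G4 bedges_rf_iff c q2 rf_img_img ne True)
      next
        case False
        then have nq: "ed q \<notin> bedges E emb (rf ` c)" by (metis bedges_rf_iff rf_img_img)
        have "cycle_cell V E emb (mir ` insert r M2) (rf ` c)" by (rule cycle_rf[OF cy])
        moreover have "mir ` insert r M2 = insert (mir r) M2" using sym by (simp add: symM_def)
        ultimately have "cycle_cell V E emb (insert (mir r) M2) (rf ` c)" by simp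
        then have "cycle_cell V E emb (insert (mir r) M1) (rf ` c)"
          by (rule cycle_local[rotated]) (use nq in \<open>auto simp: M2\<close>)
        moreover have "legal_move E M2 (mir r)" using legal_mir[OF lr] sym by (simp add: symM_def)
        then have "legal_move E M1 (mir r)" using legal_mono sub by blast
        ultimately show False using nw unfolding winmove_def has_cycle_cell_def by blast
      qed
    qed
  qed
qed

end


context sb begin

lemma mirror_ok:
  assumes sym: "symM M" and va: "valid M" and ss: "ssm M" and lp: "legal_move E M p"
  shows "legal_move E (insert p M) (mir p)" "symM (insert (mir p) (insert p M))"
    "valid (insert (mir p) (insert p M))" "ssm (insert (mir p) (insert p M))"
proof -
  obtain u v where p: "p = (u, v)" by fastforce
  have ep: "{u, v} \<in> E" and nm: "\<not> marked M {u, v}" using lp p by (auto simp: legal_move_def)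
  have uv: "u \<noteq> v" using edge_ne[OF ep] .
  have nss: "{rf u, rf v} \<noteq> {u, v}"
  proof
    assume "{rf u, rf v} = {u, v}"
    then have "rf ` {u, v} = {u, v}" by simp
    then show False using ss ep nm by (auto simp: ssm_def)
  qed
  have q: "mir p = (rf v, rf u)" by (simp add: p)
  have lq: "legal_move E M (rf v, rf u)" using legal_mir[OF lp] sym q by (simp add: symM_def)
  have eq: "{rf v, rf u} \<in> E" using ep by (simp add: insert_commute)
  have nmq0: "\<not> marked M {rf u, rf v}"
    using sym_marked[OF sym, of "{u, v}"] nm by simp
  have nmq: "\<not> marked (insert p M) {rf v, rf u}"
    using nmq0 nss p by (auto simp: marked_insert insert_commute)
  let ?q = "(rf v, rf u)"
  let ?N = "insert ?q (insert (u, v) M)"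
  have a1: "\<not> is_sink E ?N (rf v)"
  proof
    assume sk: "is_sink E ?N (rf v)"
    have "\<not> is_sink E (insert ?q M) (rf v)" using lq by (simp add: legal_move_def)
    then obtain y where y: "{rf v, y} \<in> E" "(y, rf v) \<notin> insert ?q M" by (auto simp: is_sink_def)
    have "(y, rf v) \<in> ?N" using sk y(1) unfolding is_sink_def by blast
    then have "(y, rf v) = (u, v)" using y(2) by blast
    then have yv: "y = u" "rf v = v" by auto
    have "{rf v, rf u} \<in> E" using eq .
    then have "(rf u, rf v) \<in> ?N" using sk unfolding is_sink_def by blast
    moreover have "(rf u, rf v) \<noteq> ?q" using eq edge_ne by auto
    moreover have "(rf u, rf v) \<noteq> (u, v)" using nss by auto
    moreover have "(rf u, rf v) \<notin> M" using nmq0 by (auto simp: marked_def)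
    ultimately show False by auto
  qed
  have a2: "\<not> is_source E ?N (rf v)"
  proof
    assume sk: "is_source E ?N (rf v)"
    have "\<not> is_source E (insert ?q M) (rf v)" using lq by (simp add: legal_move_def)
    then obtain y where y: "{rf v, y} \<in> E" "(rf v, y) \<notin> insert ?q M" by (auto simp: is_source_def)
    have "(rf v, y) \<in> ?N" using sk y(1) unfolding is_source_def by blast
    then have "(rf v, y) = (u, v)" using y(2) by blast
    then have "rf v = u" by auto
    then have "{rf u, rf v} = {u, v}" by (metis rf_rf insert_commute)
    then show False using nss by simp
  qed
  have a3: "\<not> is_sink E ?N (rf u)"
  proof
    assume sk: "is_sink E ?N (rf u)"
    have "\<not> is_sink E (insert ?q M) (rf u)" using lq by (simp add: legal_move_def)
    then obtain y where y: "{rf u, y} \<in> E" "(y, rf u) \<notin> insert ?q M" by (auto simp: is_sink_def)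
    have "(y, rf u) \<in> ?N" using sk y(1) unfolding is_sink_def by blast
    then have "(y, rf u) = (u, v)" using y(2) by blast
    then have "rf u = v" by auto
    then have "{rf u, rf v} = {u, v}" by (metis rf_rf insert_commute)
    then show False using nss by simp
  qed
  have a4: "\<not> is_source E ?N (rf u)"
  proof
    assume sk: "is_source E ?N (rf u)"
    have "\<not> is_source E (insert ?q M) (rf u)" using lq by (simp add: legal_move_def)
    then obtain y where y: "{rf u, y} \<in> E" "(rf u, y) \<notin> insert ?q M" by (auto simp: is_source_def)
    have "(rf u, y) \<in> ?N" using sk y(1) unfolding is_source_def by blast
    then have "(rf u, y) = (u, v)" using y(2) by blast
    then have yv: "rf u = u" by auto
    have "{rf u, rf v} \<in> E" using eq by (simp add: insert_commute)
    then have "(rf u, rf v) \<in> ?N" using sk unfolding is_source_def by blast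
    moreover have "(rf u, rf v) \<noteq> ?q" using eq edge_ne by auto
    moreover have "(rf u, rf v) \<noteq> (u, v)" using nss by auto
    moreover have "(rf u, rf v) \<notin> M" using nmq0 by (auto simp: marked_def)
    ultimately show False by auto
  qed
  show "legal_move E (insert p M) (mir p)"
    using eq nmq a1 a2 a3 a4 by (simp add: legal_move_def q p)
  show "symM (insert (mir p) (insert p M))"
    using sym by (auto simp: symM_def image_insert p)
  show "valid (insert (mir p) (insert p M))"
    unfolding valid_def
  proof (intro conjI allI impI ballI)
    fix x assume "x \<in> insert (mir p) (insert p M)"
    then show "ed x \<in> E" using va ep eq by (auto simp: valid_def q p insert_commute)
  next
    fix x y assume xy: "(x, y) \<in> insert (mir p) (insert p M)"
    have nM1: "(v, u) \<notin> M" "(u, v) \<notin> M" using nm by (auto simp: marked_def insert_commute)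
    have nM2: "(rf u, rf v) \<notin> M" "(rf v, rf u) \<notin> M" using nmq0 by (auto simp: marked_def insert_commute)
    have d1: "(v, u) \<noteq> (rf v, rf u)" "(u, v) \<noteq> (rf v, rf u)"
      "(rf u, rf v) \<noteq> (u, v)" "(rf u, rf v) \<noteq> (v, u)" using nss uv by (auto simp: insert_commute)
    have d2: "rf u \<noteq> rf v" using uv by simp
    have vM: "(y, x) \<notin> M" if "(x, y) \<in> M" for x y using va that unfolding valid_def by blast
    have cs: "(x, y) = ?q \<or> (x, y) = (u, v) \<or> (x, y) \<in> M" using xy unfolding p mir_pair by blast
    have "(y, x) \<notin> insert ?q (insert (u, v) M)"
      using cs
    proof (elim disjE)
      assume "(x, y) = ?q" then show ?thesis using d1 d2 nM2 by auto
    next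
      assume "(x, y) = (u, v)" then show ?thesis using d1 uv nM1 by auto
    next
      assume xyM: "(x, y) \<in> M"
      have "(y, x) \<noteq> ?q" using xyM nM2 by auto
      moreover have "(y, x) \<noteq> (u, v)" using xyM nM1 by auto
      moreover have "(y, x) \<notin> M" using vM[OF xyM] .
      ultimately show ?thesis by blast
    qed
    then show "(y, x) \<notin> insert (mir p) (insert p M)" unfolding p mir_pair .
  qed
  show "ssm (insert (mir p) (insert p M))"
    using ss by (auto simp: ssm_def marked_insert)
qed

lemma valid_sub: "valid M \<Longrightarrow> M \<subseteq> V \<times> V"
  using E_sub by (auto simp: valid_def)

lemma main: "symM M \<Longrightarrow> valid M \<Longrightarrow> ssm M \<Longrightarrow> \<not> winmove M \<Longrightarrow> loses V E emb M"
proof (induction "card (V \<times> V - M)" arbitrary: M rule: less_induct)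
  case less
  show ?case
  proof (rule lose)
    fix p assume lp: "legal_move E M p"
    have "\<not> has_cycle_cell V E emb (insert p M)" using less.prems(4) lp unfolding winmove_def by blast
    moreover have "wins V E emb (insert p M)"
    proof (cases "winmove (insert p M)")
      case True
      then obtain r where "legal_move E (insert p M) r" "has_cycle_cell V E emb (insert r (insert p M))"
        by (auto simp: winmove_def)
      then show ?thesis by (rule win_cycle)
    next
      case nw: False
      note mo = mirror_ok[OF less.prems(1-3) lp]
      let ?M2 = "insert (mir p) (insert p M)"
      show ?thesis
      proof (cases "has_cycle_cell V E emb ?M2")
        case True
        then show ?thesis by (rule win_cycle[OF mo(1)])
      next
        case False
        have nw2: "\<not> winmove ?M2" by (rule step[OF mo(2) mo(4) refl nw False])
        have pin: "p \<in> V \<times> V - M"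
        proof -
          have "ed p \<in> E" "\<not> marked M (ed p)" using lp by (auto simp: legal_move_def)
          then show ?thesis using E_sub by (cases p) (auto simp: marked_def)
        qed
        have "V \<times> V - ?M2 \<subset> V \<times> V - M" using pin by auto
        then have "card (V \<times> V - ?M2) < card (V \<times> V - M)"
          using finV by (intro psubset_card_mono) auto
        then have "loses V E emb ?M2" using less.hyps mo(2-4) nw2 by blast
        then show ?thesis by (rule win_move[OF mo(1)])
      qed
    qed
    ultimately show "\<not> has_cycle_cell V E emb (insert p M) \<and> wins V E emb (insert p M)" by blast
  qed
qed

end


lemma wind_equidist:
  assumes p: "path g" and z: "z \<notin> path_image g" and im: "Im (winding_number g z) = 0"
  shows "cmod (pathfinish g - z) = cmod (pathstart g - z)"
proof -
  obtain q where q: "path q" "pathfinish q - pathstart q = 2 * of_real pi * \<i> * winding_number g z"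
    "\<And>t. t \<in> {0..1} \<Longrightarrow> g t = z + exp (q t)"
    using winding_number_as_continuous_log[OF p z] by metis
  have "Re (pathfinish q - pathstart q) = 0" unfolding q(2) using im by simp
  then have re: "Re (q 1) = Re (q 0)" by (simp add: pathfinish_def pathstart_def)
  have "pathfinish g - z = exp (q 1)" "pathstart g - z = exp (q 0)"
    using q(3)[of 1] q(3)[of 0] by (auto simp: pathfinish_def pathstart_def)
  then show ?thesis using re by simp
qed

context sb begin

lemma selfsym_cross: "e \<in> E \<Longrightarrow> rf ` e = e \<Longrightarrow> crosses_axis a w e"
proof -
  assume eE: "e \<in> E" and se: "rf ` e = e"
  obtain u v where uv: "u \<noteq> v" "e = {u, v}" using E_pair[OF eE] by blast
  have s2: "{rf u, rf v} = {u, v}" using se uv by simp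
  show ?thesis
  proof (cases "rf u = u")
    case True
    then have "rf v = v" using s2 uv by (metis doubleton_eq_iff)
    then have sv: "side a w v = 0" "side a w u = 0" using True fix_iff[OF wnz] by auto
    have ends: "{pathstart (emb e), pathfinish (emb e)} = {u, v}" using E_ends[OF eE] uv by simp
    have "pathstart (emb e) \<in> {u, v}" "pathfinish (emb e) \<in> {u, v}" using ends by blast+
    then have "side a w (pathstart (emb e)) = 0" "side a w (pathfinish (emb e)) = 0" using sv by auto
    moreover have "rf ` path_image (emb e) = path_image (emb e)"
      using img_emb_rf[OF eE] se by simp
    ultimately have "path_image (emb e) \<subseteq> sym_axis a w"
      using arc_fix[OF wnz E_arc[OF eE]] by blast
    then show ?thesis using nax eE by auto
  next
    case False
    then have ru: "rf u = v" using s2 by (metis doubleton_eq_iff)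
    have su: "side a w u \<noteq> 0" using False fix_iff[OF wnz] by auto
    have sv: "side a w v = - side a w u" using ru side_refl[OF wnz, of a u] by simp
    show ?thesis
    proof (cases "side a w u < 0")
      case True
      then show ?thesis using sv uv unfolding crosses_axis_def by (intro exI[of _ u] exI[of _ v]) auto
    next
      case False
      then have "side a w u > 0" using su by auto
      then show ?thesis using sv uv unfolding crosses_axis_def
        by (intro exI[of _ v] exI[of _ u]) (auto simp: insert_commute)
    qed
  qed
qed

lemma no_first_win: "\<not> winmove {}"
proof
  assume "winmove {}"
  then obtain r c where lr: "legal_move E {} r" and cy: "cycle_cell V E emb {r} c"
    unfolding winmove_def has_cycle_cell_def by blast
  obtain u v where r: "r = (u, v)" by fastforce
  have e: "{u, v} \<in> E" using lr r by (simp add: legal_move_def)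
  have c: "c \<in> cells V E emb" using cy by (simp add: cycle_cell_def)
  obtain s where s: "s \<in> {1, -1}" and sw: "\<And>z. z \<notin> D \<Longrightarrow>
      (\<Sum>p\<in>{p \<in> {r}. ed p \<in> bedges E emb c}. winding_number (darc emb p) z) = (if z \<in> c then s else 0)"
    using cy unfolding cycle_cell_def by blast
  obtain z0 where z0: "z0 \<in> c" using cell_ne[OF c] by blast
  have cD: "\<And>z. z \<in> c \<Longrightarrow> z \<notin> D" using cell_sub[OF c] by blast
  show False
  proof (cases "{u, v} \<in> bedges E emb c")
    case False
    then have emp: "{p \<in> {r}. ed p \<in> bedges E emb c} = {}" using r by auto
    have "0 = (if z0 \<in> c then s else 0)" using sw[OF cD[OF z0]] unfolding emp sum.empty .
    then show False using z0 s by auto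
  next
    case True
    then have S: "{p \<in> {r}. ed p \<in> bedges E emb c} = {r}" using r by auto
    note g = darc_props[OF e]
    have eq: "cmod (v - z) = cmod (u - z)" if zc: "z \<in> c" for z
    proof -
      have zi: "z \<notin> path_image (darc emb (u, v))" using cD[OF zc] e g(4) by (auto simp: drawing_def)
      have "winding_number (darc emb (u, v)) z = s" using sw[OF cD[OF zc]] zc S r by simp
      then have "Im (winding_number (darc emb (u, v)) z) = 0" using s by auto
      then show ?thesis using wind_equidist[OF arc_imp_path[OF g(1)] zi] g by simp
    qed
    obtain \<epsilon> where \<epsilon>: "\<epsilon> > 0" "ball z0 \<epsilon> \<subseteq> c" using open_cell[OF c] z0 open_contains_ball by blast
    define d where "d = v - u"
    have dnz: "d \<noteq> 0" using edge_ne[OF e] by (simp add: d_def)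
    define t where "t = \<epsilon> / (2 * cmod d)"
    have t: "t > 0" using \<epsilon> dnz by (simp add: t_def)
    define z1 where "z1 = z0 + of_real t * d"
    have "dist z0 z1 = t * cmod d" using t by (simp add: z1_def dist_norm norm_mult)
    also have "\<dots> < \<epsilon>" using \<epsilon> dnz by (simp add: t_def)
    finally have "z1 \<in> c" using \<epsilon> by auto
    have e0: "(cmod (v - z0))^2 = (cmod (u - z0))^2" using eq[OF z0] by simp
    have e1: "(cmod (v - z1))^2 = (cmod (u - z1))^2" using eq[OF \<open>z1 \<in> c\<close>] by simp
    have key: "(cmod (v - z1))^2 - (cmod (u - z1))^2
        = (cmod (v - z0))^2 - (cmod (u - z0))^2 - 2 * t * (cmod d)^2"
      unfolding cmod_power2 z1_def d_def by (simp add: algebra_simps power2_eq_square)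
    have "t * (cmod d)^2 = 0" using key e0 e1 by simp
    then show False using t dnz by simp
  qed
qed

lemma first_legal:
  assumes e: "{u, v} \<in> E" and ru: "rf u = v" and c2: "card V \<noteq> 2"
  shows "legal_move E {} (u, v)"
proof -
  have uv: "u \<noteq> v" using edge_ne[OF e] .
  have rv: "rf v = u" using ru by auto
  have uV: "u \<in> V" "v \<in> V" using e E_sub by auto
  have nb: "\<exists>w. {u, w} \<in> E \<and> w \<noteq> v"
  proof (rule ccontr)
    assume "\<not> ?thesis"
    then have hu: "\<And>w. {u, w} \<in> E \<Longrightarrow> w = v" by blast
    have hv: "w = u" if "{v, w} \<in> E" for w
    proof -
      have "{rf v, rf w} \<in> E" using that by simp
      then have "rf w = v" using hu rv by simp
      then show ?thesis using ru by (metis rf_rf)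
    qed
    have reach: "x \<in> {u, v}" if "(u, x) \<in> {(x, y). {x, y} \<in> E}\<^sup>*" for x
      using that
    proof (induction rule: rtrancl_induct)
      case base then show ?case by simp
    next
      case (step y z)
      then show ?case using hu hv by auto
    qed
    have "\<forall>x\<in>V. \<forall>y\<in>V. (x, y) \<in> {(x, y). {x, y} \<in> E}\<^sup>*" using brd by (simp add: board_def)
    then have "V \<subseteq> {u, v}" using reach uV by blast
    then have "V = {u, v}" using uV by auto
    then show False using c2 uv by simp
  qed
  then obtain w0 where w0: "{u, w0} \<in> E" "w0 \<noteq> v" by blast
  have w1: "{v, rf w0} \<in> E" "rf w0 \<noteq> u" using w0 ru by (metis edge_rf_iff, metis rf_rf)
  show ?thesis unfolding legal_move_def
  proof (intro conjI)
    show "{fst (u, v), snd (u, v)} \<in> E" using e by simp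
    show "\<not> marked {} {fst (u, v), snd (u, v)}" by (simp add: marked_def)
    show "\<not> is_sink E (insert (u, v) {}) (fst (u, v))" using e uv by (auto simp: is_sink_def)
    show "\<not> is_source E (insert (u, v) {}) (fst (u, v))" using w0 by (auto simp: is_source_def)
    show "\<not> is_sink E (insert (u, v) {}) (snd (u, v))" using w1 by (auto simp: is_sink_def)
    show "\<not> is_source E (insert (u, v) {}) (snd (u, v))" using e uv by (auto simp: is_source_def insert_commute)
  qed
qed

end


theorem corollary5p3:
  fixes V :: "complex set" and E :: "complex set set"
    and emb :: "complex set \<Rightarrow> real \<Rightarrow> complex" and a w :: complex
  assumes "board V E emb"
    and "w \<noteq> 0"
    and "reflection_invariant V E emb a w"
    and "\<forall>e\<in>E. \<not> path_image (emb e) \<subseteq> sym_axis a w"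
    and "card {e \<in> E. crosses_axis a w e} \<le> 1"
  shows "({e \<in> E. crosses_axis a w e} = {} \<longrightarrow> loses V E emb {})
       \<and> (card {e \<in> E. crosses_axis a w e} = 1 \<and> card V \<noteq> 2 \<longrightarrow> wins V E emb {})"
proof -
  interpret sb V E emb a w using assms(1-4) by unfold_locales
  have sym0: "symM {}" by (simp add: symM_def)
  have val0: "valid {}" by (simp add: valid_def)
  show ?thesis
  proof (intro conjI impI)
    assume "{e \<in> E. crosses_axis a w e} = {}"
    then have "ssm {}" using selfsym_cross by (auto simp: ssm_def)
    then show "loses V E emb {}" using main[OF sym0 val0 _ no_first_win] by blast
  next
    assume h: "card {e \<in> E. crosses_axis a w e} = 1 \<and> card V \<noteq> 2"
    then obtain f where F: "{e \<in> E. crosses_axis a w e} = {f}" by (meson card_1_singletonE)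
    then have fE: "f \<in> E" and fc: "crosses_axis a w f" by auto
    obtain u v where f: "f = {u, v}" and su: "side a w u < 0" and sv: "0 < side a w v"
      using fc by (auto simp: crosses_axis_def)
    have "crosses_axis a w (rf ` f)" unfolding crosses_axis_def f
      using su sv by (intro exI[of _ "rf v"] exI[of _ "rf u"]) (auto simp: side_refl[OF wnz] insert_commute)
    then have "rf ` f \<in> {e \<in> E. crosses_axis a w e}" using E_rf[OF fE] by simp
    then have rff: "rf ` f = f" using F by simp
    have ru: "rf u = v"
    proof -
      have "rf u \<in> {u, v}" using rff f by auto
      moreover have "rf u \<noteq> u" using su fix_iff[OF wnz] by auto
      ultimately show ?thesis by auto
    qed
    have e: "{u, v} \<in> E" using fE f by simp
    let ?p = "(u, v)"
    have mp: "mir ?p = ?p" using ru by auto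
    show "wins V E emb {}"
    proof (cases "winmove {}")
      case True
      then obtain r where "legal_move E {} r" "has_cycle_cell V E emb (insert r {})"
        unfolding winmove_def by blast
      then show ?thesis by (rule win_cycle)
    next
      case nw: False
      have lp: "legal_move E {} ?p" using first_legal[OF e ru] h by blast
      have s1: "symM {?p}" using mp by (simp add: symM_def)
      have v1: "valid {?p}" using e edge_ne[OF e] by (auto simp: valid_def)
      have ss1: "ssm {?p}"
      proof (unfold ssm_def, intro ballI impI)
        fix e' assume "e' \<in> E" "rf ` e' = e'"
        then have "e' \<in> {e \<in> E. crosses_axis a w e}" using selfsym_cross by simp
        then have "e' = {u, v}" using F f by simp
        then show "marked {?p} e'" by (auto simp: marked_def)
      qed
      show ?thesis
      proof (cases "has_cycle_cell V E emb {?p}")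
        case True
        then show ?thesis using win_cycle[OF lp] by simp
      next
        case False
        have "\<not> winmove {?p}" by (rule step[OF s1 ss1 _ nw False]) simp
        then have "loses V E emb (insert ?p {})" using main[OF s1 v1 ss1] by simp
        then show ?thesis by (rule win_move[OF lp])
      qed
    qed
  qed
qed


end
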